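(* Let $\ell\ge 1$ and $n,m_1,\dots,m_\ell$ be positive integers, $m:=\sum_{i=1}^\ell m_i$. For $i=1,\dots,\ell$ let $C_i\subseteq\mathbb{R}^{m_i}$ be a nonempty closed convex set and $A_i\in\mathbb{R}^{m_i\times n}$ a nonzero matrix, and let $\bar v\in\mathbb{R}^n$. Assume $\bigcap_{i=1}^\ell A_i^{-1}\operatorname{ri}C_i\neq\emptyset$. Let $d(\mathbf y):=\frac12\|\sum_{i=1}^\ell A_i^Ty_i-\bar v\|^2-\frac12\|\bar v\|^2+\sum_{i=1}^\ell\sigma_{C_i}(y_i)$ for $\mathbf y=(y_1,\dots,y_\ell)\in\mathbb{R}^m$ and $d^*:=\inf d$. Let $\{\mathbf y^t\}$ be generated by the following algorithm: set $\gamma_i:=\lambda_{\max}(A_i^TA_i)$, $y_i^0:=0$, $x^0_\ell:=\bar v$; for $t=0,1,2,\dots$ set $x^{t+1}_0:=x^t_\ell$ and for $i=1,\dots,\ell$ compute $$x^{t+1}_i=(I-\gamma_i^{-1}A_i^TA_i)x^{t+1}_{i-1}+\gamma_i^{-1}A_i^T\operatorname{Proj}_{C_i}(\gamma_iy_i^t+A_ix^{t+1}_{i-1}),$$ $$y^{t+1}_i=y_i^t+\gamma_i^{-1}A_ix^{t+1}_{i-1}-\gamma_i^{-1}\operatorname{Proj}_{C_i}(\gamma_iy^t_i+A_ix^{t+1}_{i-1}),$$ then set $\mathbf y^{t+1}:=(y^{t+1}_1,\dots,y^{t+1}_\ell)$. Then $d(\mathbf y^t)\to d^*$ and $\operatorname{dist}(\mathbf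 y^t,\operatorname{Argmin} d)\to0$.
   Context: $A_i^{-1}S:=\{x: A_ix\in S\}$; $\operatorname{ri}$ denotes relative interior; $\sigma_C(y):=\sup_{u\in C}\langle y,u\rangle$ is the support function; $\operatorname{Proj}_C$ is the Euclidean projection onto $C$; $\lambda_{\max}$ is the largest eigenvalue; $\operatorname{Argmin} d$ is the set of minimizers of $d$. *)

theory Defs
  imports "HOL-Analysis.Analysis"
begin

definition support_fun :: "('a::real_inner) set \<Rightarrow> 'a \<Rightarrow> ereal" where
  "support_fun C y = (SUP u\<in>C. ereal (inner y u))"

definition lambda_max :: "real^'n^'n \<Rightarrow> real" where
  "lambda_max M = Max {lam. \<exists>v. v \<noteq> 0 \<and> M *v v = lam *\<^sub>R v}"

definition Proj :: "('a::euclidean_space) set \<Rightarrow> 'a \<Rightarrow> 'a" where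
  "Proj C x = closest_point C x"

text \<open>R^m is split into blocks R^{m_1} x ... x R^{m_l}: coordinate j of R^m
  belongs to block blk j.  R^{m_i} is identified with the coordinate subspace
  of vectors supported on block i; blk_restr extracts the i-th block y_i.\<close>
definition blk_restr :: "('m \<Rightarrow> nat) \<Rightarrow> nat \<Rightarrow> real^'m \<Rightarrow> real^'m" where
  "blk_restr blk i y = (\<chi> j. if blk j = i then y $ j else 0)"

definition blk_space :: "('m \<Rightarrow> nat) \<Rightarrow> nat \<Rightarrow> (real^'m) set" where
  "blk_space blk i = {y. \<forall>j. blk j \<noteq> i \<longrightarrow> y $ j = 0}"

definition Argmin :: "('a \<Rightarrow> 'b::order) \<Rightarrow> 'a set" where
  "Argmin f = {y. \<forall>z. f y \<le> f z}"

end

theory Submission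
  imports Defs
begin


lemma inner_transpose_mv:
  fixes A :: "real^'n^'m"
  shows "inner (transpose A *v u) z = inner u (A *v z)"
proof -
  have "transpose A *v u = u v* A"
    by (metis transpose_transpose vector_transpose_matrix)
  then show ?thesis by (simp add: dot_lmul_matrix)
qed

lemma norm_add_sq:
  fixes a b :: "'a::real_inner"
  shows "(norm (a + s *\<^sub>R b))\<^sup>2 = (norm a)\<^sup>2 + 2 * s * inner a b + s\<^sup>2 * (norm b)\<^sup>2"
  by (simp add: power2_norm_eq_inner inner_add_left inner_add_right inner_commute)
     (simp add: power2_eq_square algebra_simps)

lemma eig_finite:
  fixes M :: "real^'n^'n"
  assumes sym: "\<And>u w. inner (M *v u) w = inner u (M *v w)"
  shows "finite {lam. \<exists>v. v \<noteq> 0 \<and> M *v v = lam *\<^sub>R v}"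
proof -
  let ?E = "{lam. \<exists>v. v \<noteq> 0 \<and> M *v v = lam *\<^sub>R v}"
  define f where "f lam = (SOME v. v \<noteq> 0 \<and> M *v v = lam *\<^sub>R v)" for lam
  have f: "f lam \<noteq> 0 \<and> M *v f lam = lam *\<^sub>R f lam" if "lam \<in> ?E" for lam
  proof -
    have "\<exists>v. v \<noteq> 0 \<and> M *v v = lam *\<^sub>R v" using that by simp
    then show ?thesis unfolding f_def by (rule someI_ex)
  qed
  have inj: "inj_on f ?E"
  proof (rule inj_onI)
    fix a b assume a: "a \<in> ?E" and b: "b \<in> ?E" and e: "f a = f b"
    have "a *\<^sub>R f a = b *\<^sub>R f a" using f[OF a] f[OF b] e by metis
    then have "(a - b) *\<^sub>R f a = 0" by (simp add: algebra_simps)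
    then show "a = b" using f[OF a] by simp
  qed
  have orth: "pairwise orthogonal (f ` ?E)"
    unfolding pairwise_def
  proof (intro ballI impI)
    fix p q assume "p \<in> f ` ?E" "q \<in> f ` ?E" and ne: "p \<noteq> q"
    then obtain a b where a: "a \<in> ?E" and b: "b \<in> ?E" and pq: "p = f a" "q = f b" by blast
    from ne pq have ne: "f a \<noteq> f b" by simp
    have "a \<noteq> b" using ne by auto
    have "inner (M *v f a) (f b) = inner (f a) (M *v f b)" by (rule sym)
    then have "a * inner (f a) (f b) = b * inner (f a) (f b)"
      using f[OF a] f[OF b] by simp
    then have "(a - b) * inner (f a) (f b) = 0" by (simp add: algebra_simps)
    then show "orthogonal p q" unfolding pq using \<open>a \<noteq> b\<close> by (simp add: orthogonal_def)
  qed
  have "0 \<notin> f ` ?E"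
  proof
    assume "0 \<in> f ` ?E"
    then obtain a where "a \<in> ?E" "0 = f a" by blast
    with f show False by metis
  qed
  then have "independent (f ` ?E)" using orth pairwise_orthogonal_independent by blast
  then have "finite (f ` ?E)" using independent_bound by blast
  then show ?thesis using inj finite_imageD by blast
qed

lemma lam_max_bound:
  fixes A :: "real^'n^'m"
  assumes "A \<noteq> 0"
  shows "lambda_max (transpose A ** A) > 0 \<and>
         (\<forall>u. (norm (transpose A *v u))\<^sup>2 \<le> lambda_max (transpose A ** A) * (norm u)\<^sup>2)"
proof -
  let ?M = "transpose A ** A"
  let ?q = "\<lambda>z. (norm (A *v z))\<^sup>2"
  have Mq: "inner (?M *v u) w = inner (A *v u) (A *v w)" for u w
    by (simp only: matrix_vector_mul_assoc[symmetric] inner_transpose_mv)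
  have sym: "inner (?M *v u) w = inner u (?M *v w)" for u w
    using Mq[of u w] Mq[of w u] by (simp add: inner_commute)
  have "continuous_on (sphere 0 1) ?q"
    by (intro continuous_intros)
  moreover have "sphere (0::real^'n) 1 \<noteq> {}" by simp
  ultimately obtain u0 where u0: "u0 \<in> sphere 0 1" and mx: "\<And>z. z \<in> sphere 0 1 \<Longrightarrow> ?q z \<le> ?q u0"
    using continuous_attains_sup[OF compact_sphere] by blast
  define mu where "mu = ?q u0"
  have nu0: "norm u0 = 1" using u0 by simp
  have hom: "?q z \<le> mu * (norm z)\<^sup>2" for z
  proof (cases "z = 0")
    case True then show ?thesis by simp
  next
    case False
    then have "(1 / norm z) *\<^sub>R z \<in> sphere 0 1" by simp
    then have "?q ((1 / norm z) *\<^sub>R z) \<le> mu" using mx mu_def by blast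
    then have "(norm (A *v z))\<^sup>2 / (norm z)\<^sup>2 \<le> mu"
      by (simp add: matrix_vector_mult_scaleR power_divide)
    then show ?thesis using False by (simp add: divide_le_eq mult.commute)
  qed
  have eig: "?M *v u0 = mu *\<^sub>R u0"
  proof -
    have c0: "inner (A *v u0) (A *v w) - mu * inner u0 w = 0" for w
    proof -
      define c where "c = inner (A *v u0) (A *v w) - mu * inner u0 w"
      define b where "b = ?q w - mu * (norm w)\<^sup>2"
      have quad: "2 * s * c + s\<^sup>2 * b \<le> 0" for s
      proof -
        have "?q (u0 + s *\<^sub>R w) \<le> mu * (norm (u0 + s *\<^sub>R w))\<^sup>2" by (rule hom)
        moreover have "?q (u0 + s *\<^sub>R w) = mu + 2 * s * inner (A *v u0) (A *v w) + s\<^sup>2 * ?q w"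
          unfolding mu_def
          by (simp add: matrix_vector_right_distrib matrix_vector_mult_scaleR norm_add_sq)
        moreover have "(norm (u0 + s *\<^sub>R w))\<^sup>2 = 1 + 2 * s * inner u0 w + s\<^sup>2 * (norm w)\<^sup>2"
          using nu0 by (simp add: norm_add_sq)
        ultimately show ?thesis unfolding c_def b_def by (simp add: algebra_simps)
      qed
      define k where "k = \<bar>b\<bar> + 1"
      define s where "s = c / k"
      have pos: "k > 0" unfolding k_def by simp
      have q: "2 * s * c + s\<^sup>2 * b \<le> 0" by (rule quad)
      have "k\<^sup>2 * (2 * s * c + s\<^sup>2 * b) = 2 * c * c * k + c * c * b"
        unfolding s_def using pos by (simp add: field_simps power2_eq_square)
      moreover have "k\<^sup>2 * (2 * s * c + s\<^sup>2 * b) \<le> 0"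
        using q by (simp add: mult_nonneg_nonpos)
      ultimately have "2 * c * c * (\<bar>b\<bar> + 1) + c * c * b \<le> 0" unfolding k_def by simp
      then have "c * c * (2 * \<bar>b\<bar> + 2 + b) \<le> 0" by (simp add: algebra_simps)
      moreover have "2 * \<bar>b\<bar> + 2 + b > 0" by linarith
      ultimately have "c * c \<le> 0" by (simp add: mult_le_0_iff)
      then have "c = 0" by (metis mult_le_0_iff order_antisym_conv)
      then show ?thesis unfolding c_def .
    qed
    have "inner (?M *v u0 - mu *\<^sub>R u0) w = 0" for w
      using c0[of w] by (simp add: inner_diff_left Mq)
    then have "inner (?M *v u0 - mu *\<^sub>R u0) (?M *v u0 - mu *\<^sub>R u0) = 0" by blast
    then show ?thesis by simp
  qed
  have "u0 \<noteq> 0" using nu0 by auto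
  then have mem: "mu \<in> {lam. \<exists>v. v \<noteq> 0 \<and> ?M *v v = lam *\<^sub>R v}" using eig by blast
  have ge: "lambda_max ?M \<ge> mu"
    unfolding lambda_max_def using eig_finite[OF sym] mem by (rule Max_ge)
  have "mu > 0"
  proof -
    obtain i where "A $ i \<noteq> 0" using assms by (metis vec_eq_iff zero_index)
    then obtain j where ij: "A $ i $ j \<noteq> 0" by (metis vec_eq_iff zero_index)
    have "(A *v axis j 1) $ i = A $ i $ j"
      by (simp add: matrix_vector_mult_basis column_def)
    then have "A *v axis j 1 \<noteq> 0" using ij by auto
    then have p: "?q (axis j 1) > 0" by simp
    have "?q (axis j 1) \<le> mu * (norm (axis j (1::real)))\<^sup>2" by (rule hom)
    then have "?q (axis j 1) \<le> mu" by simp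
    with p show ?thesis by linarith
  qed
  have bnd: "(norm (transpose A *v u))\<^sup>2 \<le> mu * (norm u)\<^sup>2" for u
  proof -
    define z where "z = transpose A *v u"
    have "(norm z)\<^sup>2 = inner u (A *v z)"
      using inner_transpose_mv[of A u z] unfolding power2_norm_eq_inner z_def[symmetric] .
    also have "\<dots> \<le> norm u * norm (A *v z)" by (rule norm_cauchy_schwarz)
    finally have h1: "(norm z)\<^sup>2 \<le> norm u * norm (A *v z)" .
    have "((norm z)\<^sup>2)\<^sup>2 \<le> (norm u * norm (A *v z))\<^sup>2"
      by (rule power_mono[OF h1]) simp
    also have "\<dots> = (norm u)\<^sup>2 * (norm (A *v z))\<^sup>2" by (rule power_mult_distrib)
    also have "\<dots> \<le> (norm u)\<^sup>2 * (mu * (norm z)\<^sup>2)" using hom[of z] by (simp add: mult_left_mono)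
    finally have h2: "(norm z)\<^sup>2 * (norm z)\<^sup>2 \<le> (mu * (norm u)\<^sup>2) * (norm z)\<^sup>2"
      by (simp add: power2_eq_square algebra_simps)
    show ?thesis
    proof (cases "z = 0")
      case True then show ?thesis using \<open>mu > 0\<close> unfolding z_def by simp
    next
      case False then have "(norm z)\<^sup>2 > 0" by simp
      then have "(norm z)\<^sup>2 \<le> mu * (norm u)\<^sup>2" using h2 by (simp only: mult_le_cancel_right)
      then show ?thesis unfolding z_def .
    qed
  qed
  show ?thesis
  proof
    show "lambda_max ?M > 0" using ge \<open>mu > 0\<close> by linarith
    show "\<forall>u. (norm (transpose A *v u))\<^sup>2 \<le> lambda_max ?M * (norm u)\<^sup>2"
    proof
      fix u :: "real^'m"
      have "mu * (norm u)\<^sup>2 \<le> lambda_max ?M * (norm u)\<^sup>2"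
        using ge by (rule mult_right_mono) simp
      then show "(norm (transpose A *v u))\<^sup>2 \<le> lambda_max ?M * (norm u)\<^sup>2"
        using bnd[of u] by linarith
    qed
  qed
qed



declare transpose_matrix_vector[simp del]

lemma restr_comp: "blk_restr blk i z $ j = (if blk j = i then z $ j else 0)"
  by (simp add: blk_restr_def)

lemma restr_add: "blk_restr blk i (a + b) = blk_restr blk i a + blk_restr blk i b"
  by (simp add: vec_eq_iff restr_comp)
lemma restr_diff: "blk_restr blk i (a - b) = blk_restr blk i a - blk_restr blk i b"
  by (simp add: vec_eq_iff restr_comp)
lemma restr_scale: "blk_restr blk i (c *\<^sub>R a) = c *\<^sub>R blk_restr blk i a"
  by (simp add: vec_eq_iff restr_comp)
lemma restr_zero: "blk_restr blk i 0 = 0"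
  by (simp add: vec_eq_iff restr_comp)
lemma restr_sum: "blk_restr blk i (\<Sum>k\<in>K. f k) = (\<Sum>k\<in>K. blk_restr blk i (f k))"
  by (induction K rule: infinite_finite_induct) (auto simp: restr_add restr_zero)
lemma linear_restr: "linear (blk_restr blk i)"
  by (rule linearI) (simp_all add: restr_add restr_scale)

lemma restr_in: "blk_restr blk i z \<in> blk_space blk i"
  by (simp add: blk_space_def restr_comp)
lemma restr_id: "w \<in> blk_space blk i \<Longrightarrow> blk_restr blk i w = w"
  by (auto simp: vec_eq_iff restr_comp blk_space_def)
lemma restr_other: "w \<in> blk_space blk j \<Longrightarrow> i \<noteq> j \<Longrightarrow> blk_restr blk i w = 0"
  by (auto simp: vec_eq_iff restr_comp blk_space_def)
lemma inner_restr: "w \<in> blk_space blk i \<Longrightarrow> inner (blk_restr blk i z) w = inner z w"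
  by (auto simp: inner_vec_def restr_comp blk_space_def intro!: sum.cong)
lemma subspace_blk: "subspace (blk_space blk i)"
  by (auto simp: subspace_def blk_space_def)
lemma sum_restr:
  assumes "finite I" "\<forall>j. blk j \<in> I"
  shows "(\<Sum>i\<in>I. blk_restr blk i z) = z"
proof -
  have "(\<Sum>i\<in>I. blk_restr blk i z) $ j = z $ j" for j
    using assms by (simp add: sum_component restr_comp)
  then show ?thesis by (simp add: vec_eq_iff)
qed
lemma norm_restr_le: "norm (blk_restr blk i z) \<le> norm z"
  by (rule norm_le_componentwise_cart) (simp add: restr_comp)

lemma norm_diff_sq:
  fixes a b :: "'a::real_inner"
  shows "(norm (a - b))\<^sup>2 = (norm a)\<^sup>2 - 2 * inner a b + (norm b)\<^sup>2"
  by (simp add: power2_norm_eq_inner inner_diff_left inner_diff_right inner_commute)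

lemma sup_ge: "c \<in> S \<Longrightarrow> ereal (inner w c) \<le> support_fun S w"
  unfolding support_fun_def by (rule SUP_upper)

lemma sup_attained:
  assumes "p \<in> S" "\<forall>c\<in>S. inner w c \<le> inner w p"
  shows "support_fun S w = ereal (inner w p)"
proof (rule antisym)
  show "support_fun S w \<le> ereal (inner w p)"
    unfolding support_fun_def using assms(2) by (intro SUP_least) simp
  show "ereal (inner w p) \<le> support_fun S w" using assms(1) by (rule sup_ge)
qed

lemma sup_zero: "S \<noteq> {} \<Longrightarrow> support_fun S 0 = 0"
  unfolding support_fun_def by (simp add: zero_ereal_def)

locale setting =
  fixes l :: nat
    and blk :: "'m::finite \<Rightarrow> nat"
    and C :: "nat \<Rightarrow> (real^'m) set"
    and A :: "nat \<Rightarrow> real^'n::finite^'m"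
    and vbar :: "real^'n"
    and d :: "real^'m \<Rightarrow> ereal"
    and gam :: "nat \<Rightarrow> real"
    and x :: "nat \<Rightarrow> nat \<Rightarrow> real^'n"
    and y :: "nat \<Rightarrow> nat \<Rightarrow> real^'m"
    and Y :: "nat \<Rightarrow> real^'m"
  assumes l_pos: "l \<ge> 1"
    and blk_range: "\<forall>j. blk j \<in> {1..l}"
    and blk_nonempty: "\<forall>i\<in>{1..l}. \<exists>j. blk j = i"
    and C_block: "\<forall>i\<in>{1..l}. C i \<subseteq> blk_space blk i"
    and C_ne: "\<forall>i\<in>{1..l}. C i \<noteq> {}"
    and C_closed: "\<forall>i\<in>{1..l}. closed (C i)"
    and C_convex: "\<forall>i\<in>{1..l}. convex (C i)"
    and A_block: "\<forall>i\<in>{1..l}. \<forall>j. blk j \<noteq> i \<longrightarrow> A i $ j = 0"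
    and A_nz: "\<forall>i\<in>{1..l}. A i \<noteq> 0"
    and CQ: "(\<Inter>i\<in>{1..l}. {z. A i *v z \<in> rel_interior (C i)}) \<noteq> {}"
    and d_def: "\<forall>yy. d yy = ereal ((1/2) * (norm ((\<Sum>i\<in>{1..l}. transpose (A i) *v blk_restr blk i yy) - vbar))\<^sup>2
                                  - (1/2) * (norm vbar)\<^sup>2)
                         + (\<Sum>i\<in>{1..l}. support_fun (C i) (blk_restr blk i yy))"
    and gam_def: "\<forall>i\<in>{1..l}. gam i = lambda_max (transpose (A i) ** A i)"
    and y_init: "\<forall>i\<in>{1..l}. y 0 i = 0"
    and x_init: "x 0 l = vbar"
    and x_start: "\<forall>t. x (Suc t) 0 = x t l"
    and x_step: "\<forall>t. \<forall>i\<in>{1..l}.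
        x (Suc t) i = (x (Suc t) (i - 1) - (1 / gam i) *\<^sub>R (transpose (A i) *v (A i *v x (Suc t) (i - 1))))
          + (1 / gam i) *\<^sub>R (transpose (A i) *v Proj (C i) (gam i *\<^sub>R y t i + A i *v x (Suc t) (i - 1)))"
    and y_step: "\<forall>t. \<forall>i\<in>{1..l}.
        y (Suc t) i = y t i + (1 / gam i) *\<^sub>R (A i *v x (Suc t) (i - 1))
          - (1 / gam i) *\<^sub>R Proj (C i) (gam i *\<^sub>R y t i + A i *v x (Suc t) (i - 1))"
    and Y_def: "\<forall>t. Y t = (\<Sum>i\<in>{1..l}. y t i)"
begin

definition W :: "real^'m \<Rightarrow> real^'n" where
  "W z = (\<Sum>i\<in>{1..l}. transpose (A i) *v blk_restr blk i z)"

definition pp :: "nat \<Rightarrow> nat \<Rightarrow> real^'m" where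
  "pp t i = Proj (C i) (gam i *\<^sub>R y t i + A i *v x (Suc t) (i - 1))"

definition dl :: "nat \<Rightarrow> nat \<Rightarrow> real^'m" where
  "dl t i = y (Suc t) i - y t i"

lemma d_eq: "d z = ereal ((1/2) * (norm (W z - vbar))\<^sup>2 - (1/2) * (norm vbar)\<^sup>2)
                 + (\<Sum>i\<in>{1..l}. support_fun (C i) (blk_restr blk i z))"
  using d_def by (simp add: W_def)

lemma W_add: "W (a + b) = W a + W b"
  by (simp add: W_def restr_add matrix_vector_right_distrib sum.distrib)
lemma W_diff: "W (a - b) = W a - W b"
  by (simp add: W_def restr_diff matrix_vector_mult_diff_distrib sum_subtractf)
lemma W_scale: "W (c *\<^sub>R a) = c *\<^sub>R W a"
  by (simp add: W_def restr_scale matrix_vector_mult_scaleR scaleR_sum_right)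
lemma W_zero: "W 0 = 0"
  by (simp add: W_def restr_zero)
lemma linear_W: "linear W"
  by (rule linearI) (simp_all add: W_add W_scale)

lemma W_inner: "inner (W z) u = (\<Sum>i\<in>{1..l}. inner (blk_restr blk i z) (A i *v u))"
  by (simp add: W_def inner_sum_left inner_transpose_mv)

lemma gam_pos: "i \<in> {1..l} \<Longrightarrow> gam i > 0"
  using lam_max_bound[of "A i"] gam_def A_nz by auto
lemma gam_bnd: "i \<in> {1..l} \<Longrightarrow> (norm (transpose (A i) *v u))\<^sup>2 \<le> gam i * (norm u)\<^sup>2"
  using lam_max_bound[of "A i"] gam_def A_nz by auto

lemma A_space: "i \<in> {1..l} \<Longrightarrow> A i *v z \<in> blk_space blk i"
  using A_block by (auto simp: blk_space_def matrix_vector_mult_def)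

lemma C_space: "i \<in> {1..l} \<Longrightarrow> c \<in> C i \<Longrightarrow> c \<in> blk_space blk i"
  using C_block by auto

lemma Proj_in: "i \<in> {1..l} \<Longrightarrow> Proj (C i) u \<in> C i"
  unfolding Proj_def using C_closed C_ne by (simp add: closest_point_in_set)

lemma pp_in: "i \<in> {1..l} \<Longrightarrow> pp t i \<in> C i"
  unfolding pp_def by (rule Proj_in)

lemma y_space: "i \<in> {1..l} \<Longrightarrow> y t i \<in> blk_space blk i"
proof (induction t)
  case 0 then show ?case using y_init by (simp add: blk_space_def)
next
  case (Suc t)
  have "y (Suc t) i = y t i + (1 / gam i) *\<^sub>R (A i *v x (Suc t) (i - 1)) - (1 / gam i) *\<^sub>R pp t i"
    using y_step Suc.prems by (simp add: pp_def)
  moreover have "pp t i \<in> blk_space blk i" using pp_in[OF Suc.prems] C_space[OF Suc.prems] by blast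
  ultimately show ?case using Suc subspace_blk[of blk i] A_space[OF Suc.prems]
    by (simp add: subspace_add subspace_diff subspace_scale)
qed

lemma dl_eq: "i \<in> {1..l} \<Longrightarrow> gam i *\<^sub>R dl t i = A i *v x (Suc t) (i - 1) - pp t i"
proof -
  assume i: "i \<in> {1..l}"
  have "y (Suc t) i = y t i + (1 / gam i) *\<^sub>R (A i *v x (Suc t) (i - 1)) - (1 / gam i) *\<^sub>R pp t i"
    using y_step i by (simp add: pp_def)
  then have "dl t i = (1 / gam i) *\<^sub>R (A i *v x (Suc t) (i - 1) - pp t i)"
    by (simp add: dl_def scaleR_diff_right)
  then show ?thesis using gam_pos[OF i] by simp
qed

lemma x_rec: "i \<in> {1..l} \<Longrightarrow> x (Suc t) i = x (Suc t) (i - 1) - transpose (A i) *v dl t i"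
proof -
  assume i: "i \<in> {1..l}"
  have "dl t i = (1 / gam i) *\<^sub>R (A i *v x (Suc t) (i - 1) - pp t i)"
    using dl_eq[OF i, of t] gam_pos[OF i] by (metis divide_inverse_commute divide_self_if
        less_irrefl mult.right_neutral scaleR_one scaleR_scaleR)
  then have e: "transpose (A i) *v dl t i = (1 / gam i) *\<^sub>R (transpose (A i) *v (A i *v x (Suc t) (i - 1)))
      - (1 / gam i) *\<^sub>R (transpose (A i) *v pp t i)"
    by (simp only: matrix_vector_mult_scaleR matrix_vector_mult_diff_distrib scaleR_diff_right)
  have xs: "x (Suc t) i = (x (Suc t) (i - 1) - (1 / gam i) *\<^sub>R (transpose (A i) *v (A i *v x (Suc t) (i - 1))))
          + (1 / gam i) *\<^sub>R (transpose (A i) *v pp t i)"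
    using x_step i unfolding pp_def by blast
  show ?thesis unfolding xs e by (simp add: algebra_simps)
qed

lemma Y_restr: "i \<in> {1..l} \<Longrightarrow> blk_restr blk i (Y t) = y t i"
proof -
  assume i: "i \<in> {1..l}"
  have "blk_restr blk i (Y t) = (\<Sum>j\<in>{1..l}. blk_restr blk i (y t j))"
    using Y_def by (simp add: restr_sum)
  also have "\<dots> = (\<Sum>j\<in>{1..l}. if j = i then y t i else 0)"
  proof (rule sum.cong)
    fix j assume j: "j \<in> {1..l}"
    show "blk_restr blk i (y t j) = (if j = i then y t i else 0)"
      using restr_id[OF y_space[OF j]] restr_other[OF y_space[OF j]] by auto
  qed simp
  also have "\<dots> = y t i" using i by simp
  finally show ?thesis .
qed

lemma W_Y: "W (Y t) = (\<Sum>i\<in>{1..l}. transpose (A i) *v y t i)"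
  unfolding W_def by (rule sum.cong) (simp_all add: Y_restr)

lemma x_sweep: "k \<le> l \<Longrightarrow> x (Suc t) k = x (Suc t) 0 - (\<Sum>j\<in>{1..k}. transpose (A j) *v dl t j)"
proof (induction k)
  case 0 then show ?case by simp
next
  case (Suc k)
  then have "Suc k \<in> {1..l}" by simp
  then show ?case using Suc x_rec[of "Suc k" t] by simp
qed

lemma Y_zero: "Y 0 = 0"
  using Y_def y_init by simp

lemma x_last: "x t l = vbar - W (Y t)"
proof (induction t)
  case 0 then show ?case using x_init Y_zero W_zero by simp
next
  case (Suc t)
  have "x (Suc t) l = x t l - (\<Sum>j\<in>{1..l}. transpose (A j) *v dl t j)"
    using x_sweep[of l t] x_start by simp
  also have "\<dots> = vbar - (\<Sum>j\<in>{1..l}. transpose (A j) *v y t j) - (\<Sum>j\<in>{1..l}. transpose (A j) *v y (Suc t) j - transpose (A j) *v y t j)"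
    using Suc W_Y by (simp add: dl_def matrix_vector_mult_diff_distrib)
  also have "\<dots> = vbar - W (Y (Suc t))"
    by (simp add: W_Y sum_subtractf)
  finally show ?case .
qed

lemma x_mid: "i \<in> {1..l} \<Longrightarrow> x (Suc t) (i - 1) = vbar - W (Y t) - (\<Sum>j\<in>{1..i-1}. transpose (A j) *v dl t j)"
proof -
  assume "i \<in> {1..l}"
  then have "i - 1 \<le> l" by auto
  from x_sweep[OF this, of t] show ?thesis using x_start x_last by simp
qed

lemma y_normal:
  assumes i: "i \<in> {1..l}" and c: "c \<in> C i"
  shows "inner (y (Suc t) i) (c - pp t i) \<le> 0"
proof -
  define u where "u = gam i *\<^sub>R y t i + A i *v x (Suc t) (i - 1)"
  have pc: "pp t i = closest_point (C i) u" unfolding pp_def Proj_def u_def ..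
  have "inner (u - pp t i) (c - pp t i) \<le> 0"
  proof -
    have cl: "closed (C i)" and cv: "convex (C i)" and ne: "C i \<noteq> {}" using C_convex C_closed C_ne i by auto
    show ?thesis unfolding pc
      by (rule any_closest_point_dot[OF cv cl closest_point_in_set[OF cl ne] c])
         (use closest_point_le[OF cl] in blast)
  qed
  moreover have "u - pp t i = gam i *\<^sub>R y (Suc t) i"
  proof -
    have "y (Suc t) i = y t i + dl t i" by (simp add: dl_def)
    then have "gam i *\<^sub>R y (Suc t) i = gam i *\<^sub>R y t i + gam i *\<^sub>R dl t i"
      by (simp add: scaleR_add_right)
    then show ?thesis using dl_eq[OF i, of t] unfolding u_def by simp
  qed
  ultimately have "gam i * inner (y (Suc t) i) (c - pp t i) \<le> 0" by simp
  then show ?thesis using gam_pos[OF i] by (simp add: mult_le_0_iff)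
qed

lemma sig_suc: "i \<in> {1..l} \<Longrightarrow> support_fun (C i) (y (Suc t) i) = ereal (inner (y (Suc t) i) (pp t i))"
  by (rule sup_attained) (use pp_in y_normal in \<open>auto simp: inner_diff_right\<close>)

definition s :: "nat \<Rightarrow> nat \<Rightarrow> real" where
  "s t i = (if t = 0 then 0 else inner (y t i) (pp (t - 1) i))"

lemma sig_s: "i \<in> {1..l} \<Longrightarrow> support_fun (C i) (y t i) = ereal (s t i)"
  by (cases t) (simp_all add: s_def sig_suc y_init sup_zero C_ne)

lemma s_ge: "i \<in> {1..l} \<Longrightarrow> inner (y t i) (pp t i) \<le> s t i"
proof -
  assume i: "i \<in> {1..l}"
  have "pp t i \<in> C i" using i by (rule pp_in)
  from sup_ge[OF this, of "y t i"] sig_s[OF i, of t] show ?thesis by simp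
qed

definition Dq :: "nat \<Rightarrow> real" where
  "Dq t = (1/2) * (norm (W (Y t) - vbar))\<^sup>2 - (1/2) * (norm vbar)\<^sup>2 + (\<Sum>i\<in>{1..l}. s t i)"

lemma dY: "d (Y t) = ereal (Dq t)"
proof -
  have "(\<Sum>i\<in>{1..l}. support_fun (C i) (blk_restr blk i (Y t))) = (\<Sum>i\<in>{1..l}. ereal (s t i))"
    by (rule sum.cong) (simp_all add: Y_restr sig_s)
  then show ?thesis by (simp add: d_eq Dq_def sum_ereal)
qed

definition E :: "nat \<Rightarrow> nat \<Rightarrow> real" where
  "E t k = (1/2) * (norm (x (Suc t) k))\<^sup>2 - (1/2) * (norm vbar)\<^sup>2
     + (\<Sum>j\<in>{1..k}. s (Suc t) j) + (\<Sum>j\<in>{Suc k..l}. s t j)"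

lemma E0: "E t 0 = Dq t"
  unfolding E_def Dq_def using x_start x_last by (simp add: norm_minus_commute)

lemma El: "E t l = Dq (Suc t)"
  unfolding E_def Dq_def using x_last[of "Suc t"] by (simp add: norm_minus_commute)

lemma Estep:
  assumes k: "k \<in> {1..l}"
  shows "E t k + gam k / 2 * (norm (dl t k))\<^sup>2 \<le> E t (k - 1)"
proof -
  obtain k' where kk: "k = Suc k'" using k by (cases k) auto
  define x0 where "x0 = x (Suc t) (k - 1)"
  define dd where "dd = dl t k"
  define p where "p = pp t k"
  have x1: "x (Suc t) k = x0 - transpose (A k) *v dd" unfolding x0_def dd_def using x_rec[OF k] .
  have g: "gam k *\<^sub>R dd = A k *v x0 - p" unfolding dd_def x0_def p_def using dl_eq[OF k] .
  have s1: "s (Suc t) k = inner (y t k + dd) p" by (simp add: s_def dd_def p_def dl_def)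
  have s0: "inner (y t k) p \<le> s t k" unfolding p_def by (rule s_ge[OF k])
  have nb: "(norm (transpose (A k) *v dd))\<^sup>2 \<le> gam k * (norm dd)\<^sup>2" by (rule gam_bnd[OF k])
  have ip: "inner x0 (transpose (A k) *v dd) = inner dd (A k *v x0)"
    by (metis inner_commute inner_transpose_mv)
  have "inner dd (A k *v x0) - inner dd p = gam k * (norm dd)\<^sup>2"
  proof -
    have "inner dd (A k *v x0) - inner dd p = inner dd (gam k *\<^sub>R dd)" by (simp add: g inner_diff_right)
    then show ?thesis by (simp add: power2_norm_eq_inner)
  qed
  then have key: "(1/2) * (norm (x (Suc t) k))\<^sup>2 - (1/2) * (norm x0)\<^sup>2 + s (Suc t) k - s t k
      \<le> - gam k / 2 * (norm dd)\<^sup>2"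
    unfolding x1 norm_diff_sq ip s1 using s0 nb by (simp add: inner_add_left algebra_simps)
  have sA: "(\<Sum>j\<in>{1..k}. s (Suc t) j) = (\<Sum>j\<in>{1..k-1}. s (Suc t) j) + s (Suc t) k"
    unfolding kk by simp
  have sB: "(\<Sum>j\<in>{Suc (k-1)..l}. s t j) = s t k + (\<Sum>j\<in>{Suc k..l}. s t j)"
    using k kk by (simp add: sum.atLeast_Suc_atMost)
  show ?thesis
    unfolding E_def sA sB using key unfolding x0_def dd_def by simp
qed

lemma Esum: "k \<le> l \<Longrightarrow> E t k + (\<Sum>j\<in>{1..k}. gam j / 2 * (norm (dl t j))\<^sup>2) \<le> E t 0"
proof (induction k)
  case 0 then show ?case by simp
next
  case (Suc k)
  then have "Suc k \<in> {1..l}" by simp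
  from Estep[OF this, of t] Suc show ?case by simp
qed

definition a :: "nat \<Rightarrow> real" where
  "a t = (\<Sum>j\<in>{1..l}. gam j / 2 * (norm (dl t j))\<^sup>2)"

lemma a_nonneg: "a t \<ge> 0"
  unfolding a_def
proof (rule sum_nonneg)
  fix j assume "j \<in> {1..l}"
  then have "gam j > 0" by (rule gam_pos)
  then show "0 \<le> gam j / 2 * (norm (dl t j))\<^sup>2" by simp
qed

lemma Dq_dec: "Dq (Suc t) + a t \<le> Dq t"
  using Esum[of l t] E0 El by (simp add: a_def)

lemma wd_real:
  fixes u v x0 :: "real^'n"
  shows "-(1/2) * (norm (v - x0))\<^sup>2 \<le> (1/2) * (norm (u - v))\<^sup>2 - (1/2) * (norm v)\<^sup>2 + inner u x0"
proof -
  have "0 \<le> (1/2) * (norm (u - v + x0))\<^sup>2" by simp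
  then show ?thesis
    by (simp add: power2_norm_eq_inner inner_diff_left inner_diff_right inner_add_left
        inner_add_right inner_commute algebra_simps)
qed

lemma wd:
  assumes x0: "\<forall>i\<in>{1..l}. A i *v x0 \<in> C i"
  shows "ereal (-(1/2) * (norm (vbar - x0))\<^sup>2) \<le> d z"
proof -
  have "(\<Sum>i\<in>{1..l}. ereal (inner (blk_restr blk i z) (A i *v x0)))
      \<le> (\<Sum>i\<in>{1..l}. support_fun (C i) (blk_restr blk i z))"
    by (rule sum_mono) (use x0 sup_ge in blast)
  then have h: "ereal (inner (W z) x0) \<le> (\<Sum>i\<in>{1..l}. support_fun (C i) (blk_restr blk i z))"
    by (simp add: sum_ereal W_inner)
  have "ereal (-(1/2) * (norm (vbar - x0))\<^sup>2)
      \<le> ereal ((1/2) * (norm (W z - vbar))\<^sup>2 - (1/2) * (norm vbar)\<^sup>2) + ereal (inner (W z) x0)"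
    using wd_real[of vbar x0 "W z"] by simp
  also have "\<dots> \<le> d z" unfolding d_eq using h by (rule add_left_mono)
  finally show ?thesis .
qed

definition xb :: "real^'n" where
  "xb = (SOME z. \<forall>i\<in>{1..l}. A i *v z \<in> rel_interior (C i))"

lemma xb_ri: "i \<in> {1..l} \<Longrightarrow> A i *v xb \<in> rel_interior (C i)"
proof -
  assume i: "i \<in> {1..l}"
  have "\<exists>z. \<forall>i\<in>{1..l}. A i *v z \<in> rel_interior (C i)" using CQ by blast
  then have "\<forall>i\<in>{1..l}. A i *v xb \<in> rel_interior (C i)" unfolding xb_def by (rule someI_ex)
  then show ?thesis using i by blast
qed

lemma xb_C: "i \<in> {1..l} \<Longrightarrow> A i *v xb \<in> C i"
  using xb_ri rel_interior_subset by blast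

definition K :: real where "K = (1/2) * (norm (vbar - xb))\<^sup>2"

lemma Dq_lb: "- K \<le> Dq t"
  using wd[of xb "Y t"] xb_C dY[of t] by (simp add: K_def)

lemma Dq0: "Dq 0 = 0"
  by (simp add: Dq_def Y_zero W_zero s_def)

lemma Dq_mono: "m \<le> n \<Longrightarrow> Dq n \<le> Dq m"
proof (induction n rule: dec_induct)
  case base then show ?case by simp
next
  case (step n) then show ?case using Dq_dec[of n] a_nonneg[of n] by linarith
qed

lemma Dq_le0: "Dq t \<le> 0"
  using Dq_mono[of 0 t] Dq0 by simp

lemma a_sum: "(\<Sum>t<T. a t) \<le> Dq 0 - Dq T"
proof (induction T)
  case 0 then show ?case by simp
next
  case (Suc T) then show ?case using Dq_dec[of T] by simp
qed

lemma a_lim: "a \<longlonglongrightarrow> 0"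
proof -
  have "summable a"
  proof (rule summableI_nonneg_bounded)
    show "0 \<le> a t" for t by (rule a_nonneg)
    show "sum a {..<T} \<le> K" for T using a_sum[of T] Dq0 Dq_lb[of T] by simp
  qed
  then show ?thesis by (rule summable_LIMSEQ_zero)
qed

lemma dl_lim: "i \<in> {1..l} \<Longrightarrow> (\<lambda>t. dl t i) \<longlonglongrightarrow> 0"
proof -
  assume i: "i \<in> {1..l}"
  have gp: "gam i > 0" using i by (rule gam_pos)
  have le: "gam i / 2 * (norm (dl t i))\<^sup>2 \<le> a t" for t
    unfolding a_def
  proof (rule member_le_sum[OF i])
    fix j assume "j \<in> {1..l} - {i}"
    then have "gam j > 0" using gam_pos by blast
    then show "0 \<le> gam j / 2 * (norm (dl t j))\<^sup>2" by simp
  qed simp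
  have "(\<lambda>t. (norm (dl t i))\<^sup>2) \<longlonglongrightarrow> 0"
  proof (rule tendsto_sandwich[of "\<lambda>_. 0" _ _ "\<lambda>t. (2 / gam i) * a t"])
    show "\<forall>\<^sub>F n in sequentially. 0 \<le> (norm (dl n i))\<^sup>2" by simp
    show "\<forall>\<^sub>F n in sequentially. (norm (dl n i))\<^sup>2 \<le> (2 / gam i) * a n"
      using le gp by (simp add: field_simps)
    show "(\<lambda>_. 0) \<longlonglongrightarrow> (0::real)" by simp
    show "(\<lambda>t. (2 / gam i) * a t) \<longlonglongrightarrow> 0" using tendsto_mult_left[OF a_lim, of "2 / gam i"] by simp
  qed
  then have "(\<lambda>t. sqrt ((norm (dl t i))\<^sup>2)) \<longlonglongrightarrow> sqrt 0" by (rule tendsto_real_sqrt)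
  then have "(\<lambda>t. norm (dl t i)) \<longlonglongrightarrow> 0" by simp
  then show ?thesis by (simp add: tendsto_norm_zero_iff)
qed

definition cc :: "nat \<Rightarrow> real^'m" where "cc i = A i *v xb"
definition Sset :: "nat \<Rightarrow> (real^'m) set" where "Sset i = (\<lambda>x. - cc i + x) ` C i"
definition V :: "(real^'m) set" where "V = span (\<Union>i\<in>{1..l}. Sset i)"

lemma Sset_space: "i \<in> {1..l} \<Longrightarrow> Sset i \<subseteq> blk_space blk i"
proof
  fix e assume i: "i \<in> {1..l}" and "e \<in> Sset i"
  then obtain c where c: "c \<in> C i" "e = - cc i + c" unfolding Sset_def by blast
  have "cc i \<in> blk_space blk i" unfolding cc_def using i by (rule A_space)
  moreover have "c \<in> blk_space blk i" using C_space[OF i c(1)] .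
  ultimately have "c - cc i \<in> blk_space blk i" using subspace_diff[OF subspace_blk] by blast
  then show "e \<in> blk_space blk i" using c(2) by simp
qed

lemma diff_V: "i \<in> {1..l} \<Longrightarrow> c \<in> C i \<Longrightarrow> c' \<in> C i \<Longrightarrow> c - c' \<in> V"
proof -
  assume i: "i \<in> {1..l}" and c: "c \<in> C i" and c': "c' \<in> C i"
  have "- cc i + c \<in> V" "- cc i + c' \<in> V"
    unfolding V_def Sset_def using i c c' by (auto intro!: span_base)
  then have "(- cc i + c) - (- cc i + c') \<in> V" unfolding V_def by (rule span_diff)
  then show ?thesis by simp
qed

lemma restr_V: "i \<in> {1..l} \<Longrightarrow> w \<in> V \<Longrightarrow> blk_restr blk i w \<in> span (Sset i)"
proof -
  assume i: "i \<in> {1..l}" and w: "w \<in> V"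
  have sub: "blk_restr blk i ` (\<Union>j\<in>{1..l}. Sset j) \<subseteq> span (Sset i)"
  proof
    fix e assume "e \<in> blk_restr blk i ` (\<Union>j\<in>{1..l}. Sset j)"
    then obtain j f where j: "j \<in> {1..l}" and f: "f \<in> Sset j" and e: "e = blk_restr blk i f" by blast
    have fs: "f \<in> blk_space blk j" using Sset_space[OF j] f by blast
    show "e \<in> span (Sset i)"
    proof (cases "j = i")
      case True then show ?thesis using e f restr_id[OF fs] by (simp add: span_base)
    next
      case False then show ?thesis using e restr_other[OF fs, of i] by (simp add: span_zero)
    qed
  qed
  have "blk_restr blk i w \<in> blk_restr blk i ` V" using w by blast
  also have "\<dots> = span (blk_restr blk i ` (\<Union>j\<in>{1..l}. Sset j))"
    unfolding V_def by (rule span_linear_image[OF linear_restr, symmetric])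
  also have "\<dots> \<subseteq> span (Sset i)" using sub by (rule span_minimal) (rule subspace_span)
  finally show ?thesis .
qed

lemma eps_i: "i \<in> {1..l} \<Longrightarrow> \<exists>e>0. \<forall>w\<in>span (Sset i). norm w \<le> e \<longrightarrow> cc i + w \<in> C i"
proof -
  assume i: "i \<in> {1..l}"
  have ri: "cc i \<in> rel_interior (C i)" unfolding cc_def using i by (rule xb_ri)
  then obtain e where e: "e > 0" "cball (cc i) e \<inter> affine hull (C i) \<subseteq> C i"
    unfolding mem_rel_interior_cball by (elim conjE exE) (rule that)
  have ccC: "cc i \<in> C i" using ri rel_interior_subset by blast
  have "cc i \<in> affine hull (C i)" by (rule hull_inc[OF ccC])
  from affine_hull_span_gen[OF this]
  have ah: "affine hull (C i) = (\<lambda>x. cc i + x) ` span (Sset i)" unfolding Sset_def .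
  show ?thesis
  proof (intro exI conjI ballI impI)
    show "e > 0" by fact
    fix w assume w: "w \<in> span (Sset i)" and nw: "norm w \<le> e"
    have "cc i + w \<in> (\<lambda>x. cc i + x) ` span (Sset i)" using w by (rule imageI)
    then have "cc i + w \<in> affine hull (C i)" unfolding ah .
    moreover have "cc i + w \<in> cball (cc i) e" using nw by (simp add: dist_norm)
    ultimately show "cc i + w \<in> C i" using e(2) by blast
  qed
qed

definition ep :: real where
  "ep = (SOME e. e > 0 \<and> (\<forall>i\<in>{1..l}. \<forall>w\<in>span (Sset i). norm w \<le> e \<longrightarrow> cc i + w \<in> C i))"

lemma ep_ex: "\<exists>e. e > 0 \<and> (\<forall>i\<in>{1..l}. \<forall>w\<in>span (Sset i). norm w \<le> e \<longrightarrow> cc i + w \<in> C i)"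
proof -
  have "\<forall>i\<in>{1..l}. \<exists>e. e > 0 \<and> (\<forall>w\<in>span (Sset i). norm w \<le> e \<longrightarrow> cc i + w \<in> C i)"
    using eps_i by blast
  from bchoice[OF this] obtain f where
    f: "\<forall>i\<in>{1..l}. f i > 0 \<and> (\<forall>w\<in>span (Sset i). norm w \<le> f i \<longrightarrow> cc i + w \<in> C i)"
    by (elim exE) (rule that)
  define e where "e = Min (f ` {1..l})"
  have ne: "f ` {1..l} \<noteq> {}" using l_pos by auto
  have epos: "e > 0" unfolding e_def using f ne by (subst Min_gr_iff) auto
  have ele: "e \<le> f i" if "i \<in> {1..l}" for i unfolding e_def using that by simp
  show ?thesis
  proof (intro exI[of _ e] conjI ballI impI)
    show "e > 0" by (rule epos)
    fix i w assume i: "i \<in> {1..l}" and w: "w \<in> span (Sset i)" and nw: "norm w \<le> e"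
    have "norm w \<le> f i" using nw ele[OF i] by linarith
    then show "cc i + w \<in> C i" using f i w by blast
  qed
qed

lemma ep_both: "ep > 0 \<and> (\<forall>i\<in>{1..l}. \<forall>w\<in>span (Sset i). norm w \<le> ep \<longrightarrow> cc i + w \<in> C i)"
  unfolding ep_def by (rule someI_ex[OF ep_ex])

lemma ep_pos: "ep > 0" using ep_both by (rule conjunct1)
lemma ep_prop: "i \<in> {1..l} \<Longrightarrow> w \<in> span (Sset i) \<Longrightarrow> norm w \<le> ep \<Longrightarrow> cc i + w \<in> C i"
proof -
  assume "i \<in> {1..l}" "w \<in> span (Sset i)" "norm w \<le> ep"
  moreover from ep_both have "\<forall>i\<in>{1..l}. \<forall>w\<in>span (Sset i). norm w \<le> ep \<longrightarrow> cc i + w \<in> C i" by (rule conjunct2)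
  ultimately show ?thesis by blast
qed

definition BB :: "(real^'m) set" where
  "BB = (SOME B. B \<subseteq> V \<and> pairwise orthogonal B \<and> (\<forall>x\<in>B. norm x = 1) \<and> independent B \<and> span B = V)"

lemma BB_ex: "\<exists>B. B \<subseteq> V \<and> pairwise orthogonal B \<and> (\<forall>x\<in>B. norm x = 1) \<and> independent B \<and> span B = V"
proof -
  have sub: "subspace V" unfolding V_def by (rule subspace_span)
  obtain B where "B \<subseteq> V" "pairwise orthogonal B" "\<And>x. x \<in> B \<Longrightarrow> norm x = 1"
    "independent B" "card B = dim V" "span B = V"
    by (rule orthonormal_basis_subspace[OF sub]) auto
  then show ?thesis by (intro exI[of _ B]) simp
qed

lemma BB_all: "BB \<subseteq> V \<and> pairwise orthogonal BB \<and> (\<forall>x\<in>BB. norm x = 1) \<and> independent BB \<and> span BB = V"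
  unfolding BB_def by (rule someI_ex[OF BB_ex])

lemma BB_orth: "pairwise orthogonal BB" using BB_all by blast
lemma BB_norm: "b \<in> BB \<Longrightarrow> norm b = 1" using BB_all by blast
lemma BB_ind: "independent BB" using BB_all by blast
lemma BB_span: "span BB = V" using BB_all by blast

lemma BB_fin: "finite BB" using BB_ind independent_bound by blast

definition Pi :: "real^'m \<Rightarrow> real^'m" where
  "Pi z = (\<Sum>b\<in>BB. inner z b *\<^sub>R b)"

lemma Pi_inner_b: "b \<in> BB \<Longrightarrow> inner (Pi z) b = inner z b"
proof -
  assume b: "b \<in> BB"
  have "inner (Pi z) b = (\<Sum>b'\<in>BB. inner z b' * inner b' b)"
    by (simp add: Pi_def inner_sum_left)
  also have "\<dots> = inner z b * inner b b + (\<Sum>b'\<in>BB - {b}. inner z b' * inner b' b)"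
    using b BB_fin by (simp add: sum.remove)
  also have "(\<Sum>b'\<in>BB - {b}. inner z b' * inner b' b) = 0"
    using BB_orth b by (intro sum.neutral) (auto simp: pairwise_def orthogonal_def)
  also have "inner b b = 1" using BB_norm[OF b] by (simp add: norm_eq_sqrt_inner)
  finally show ?thesis by simp
qed

lemma Pi_inner: "w \<in> V \<Longrightarrow> inner z w = inner (Pi z) w"
proof -
  assume w: "w \<in> V"
  have "orthogonal (z - Pi z) w"
    by (rule orthogonal_to_span[of w BB]) (use w BB_span Pi_inner_b in \<open>auto simp: orthogonal_def inner_diff_left\<close>)
  then show ?thesis by (simp add: orthogonal_def inner_diff_left)
qed

lemma Pi_V: "Pi z \<in> V"
  unfolding Pi_def BB_span[symmetric] by (intro span_sum span_scale span_base)

lemma Pi_sq: "inner z (Pi z) = (norm (Pi z))\<^sup>2"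
  using Pi_inner[OF Pi_V, of z] by (simp add: power2_norm_eq_inner)

lemma linear_Pi: "linear Pi"
  by (rule linearI) (simp_all add: Pi_def inner_add_left scaleR_add_left sum.distrib scaleR_sum_right)

lemma d_lower: "ereal ((1/2) * (norm (W z - vbar))\<^sup>2 - (1/2) * (norm vbar)\<^sup>2 + inner (W z) xb + ep * norm (Pi z)) \<le> d z"
proof -
  define u where "u = (if Pi z = 0 then 0 else (ep / norm (Pi z)) *\<^sub>R Pi z)"
  have uV: "u \<in> V" unfolding u_def using Pi_V by (simp add: V_def span_zero span_scale)
  have nu: "norm u \<le> ep" unfolding u_def using ep_pos by auto
  have iu: "inner z u = ep * norm (Pi z)"
    unfolding u_def using Pi_sq[of z] by (simp add: power2_eq_square)
  have each: "ereal (inner (blk_restr blk i z) (A i *v xb) + inner z (blk_restr blk i u))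
      \<le> support_fun (C i) (blk_restr blk i z)" if i: "i \<in> {1..l}" for i
  proof -
    have "blk_restr blk i u \<in> span (Sset i)" using restr_V[OF i uV] .
    moreover have "norm (blk_restr blk i u) \<le> ep" using norm_restr_le[of blk i u] nu by linarith
    ultimately have "cc i + blk_restr blk i u \<in> C i" by (rule ep_prop[OF i])
    from sup_ge[OF this, of "blk_restr blk i z"]
    show ?thesis by (simp add: inner_add_right inner_restr[OF restr_in] cc_def)
  qed
  have "ereal (inner (W z) xb + inner z u)
      = (\<Sum>i\<in>{1..l}. ereal (inner (blk_restr blk i z) (A i *v xb) + inner z (blk_restr blk i u)))"
    using blk_range by (simp add: sum_ereal sum.distrib W_inner inner_sum_right[symmetric] sum_restr)
  also have "\<dots> \<le> (\<Sum>i\<in>{1..l}. support_fun (C i) (blk_restr blk i z))"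
    by (rule sum_mono) (rule each)
  finally have h: "ereal (inner (W z) xb + ep * norm (Pi z)) \<le> (\<Sum>i\<in>{1..l}. support_fun (C i) (blk_restr blk i z))"
    using iu by simp
  have "ereal ((1/2) * (norm (W z - vbar))\<^sup>2 - (1/2) * (norm vbar)\<^sup>2 + inner (W z) xb + ep * norm (Pi z))
      = ereal ((1/2) * (norm (W z - vbar))\<^sup>2 - (1/2) * (norm vbar)\<^sup>2) + ereal (inner (W z) xb + ep * norm (Pi z))"
    by simp
  also have "\<dots> \<le> d z" unfolding d_eq using h by (rule add_left_mono)
  finally show ?thesis .
qed

lemma sq_bound: "(norm (w::'a::real_normed_vector))\<^sup>2 \<le> c \<Longrightarrow> norm w \<le> c + 1"
proof (cases "norm w \<le> 1")
  case True
  assume "(norm w)\<^sup>2 \<le> c"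
  moreover have "0 \<le> (norm w)\<^sup>2" by simp
  ultimately show ?thesis using True by linarith
next
  case False
  assume h: "(norm w)\<^sup>2 \<le> c"
  have "norm w * 1 \<le> norm w * norm w" using False by (intro mult_left_mono) simp_all
  then have "norm w \<le> (norm w)\<^sup>2" by (simp add: power2_eq_square)
  then show ?thesis using h by linarith
qed

definition Phi :: "real^'m \<Rightarrow> (real^'n) \<times> (real^'m)" where "Phi z = (W z, Pi z)"

lemma linear_Phi: "linear Phi"
  unfolding Phi_def using linear_W linear_Pi
  by (intro linearI) (simp_all add: linear_add linear_scale)

lemma Phi_bounded: "bounded (range (\<lambda>t. Phi (Y t)))"
proof -
  have b: "norm (Phi (Y t)) \<le> (norm (vbar - xb) + 2 * K + 1) + K / ep" for t
  proof -
    define u where "u = W (Y t)"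
    have "ereal ((1/2) * (norm (u - vbar))\<^sup>2 - (1/2) * (norm vbar)\<^sup>2 + inner u xb + ep * norm (Pi (Y t))) \<le> ereal (Dq t)"
      using d_lower[of "Y t"] dY[of t] unfolding u_def by simp
    then have h: "(1/2) * (norm (u - vbar))\<^sup>2 - (1/2) * (norm vbar)\<^sup>2 + inner u xb + ep * norm (Pi (Y t)) \<le> 0"
      using Dq_le0[of t] by simp
    have eq: "(1/2) * (norm (u - vbar))\<^sup>2 - (1/2) * (norm vbar)\<^sup>2 + inner u xb
        = (1/2) * (norm (u - (vbar - xb)))\<^sup>2 - K"
      unfolding K_def
      by (simp add: power2_norm_eq_inner inner_diff_left inner_diff_right inner_commute algebra_simps)
    have h2: "(1/2) * (norm (u - (vbar - xb)))\<^sup>2 + ep * norm (Pi (Y t)) \<le> K" using h eq by linarith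
    have z1: "0 \<le> (1/2) * (norm (u - (vbar - xb)))\<^sup>2" by simp
    have z2: "0 \<le> ep * norm (Pi (Y t))" using ep_pos by simp
    have "ep * norm (Pi (Y t)) \<le> K" using h2 z1 by linarith
    then have p: "norm (Pi (Y t)) \<le> K / ep" using ep_pos by (simp add: field_simps)
    have "(norm (u - (vbar - xb)))\<^sup>2 \<le> 2 * K" using h2 z2 by linarith
    then have "norm (u - (vbar - xb)) \<le> 2 * K + 1" by (rule sq_bound)
    then have "norm u \<le> norm (vbar - xb) + 2 * K + 1" using norm_triangle_ineq2[of u "vbar - xb"] by linarith
    then show ?thesis unfolding Phi_def u_def[symmetric] using p norm_Pair_le[of u "Pi (Y t)"] by linarith
  qed
  then show ?thesis unfolding bounded_iff by blast
qed

lemma Y_suc: "Y (Suc t) = Y t + (\<Sum>i\<in>{1..l}. dl t i)"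
  using Y_def by (simp add: dl_def sum_subtractf)

lemma bl_W: "bounded_linear W" using linear_W linear_conv_bounded_linear by blast
lemma bl_Pi: "bounded_linear Pi" using linear_Pi linear_conv_bounded_linear by blast
lemma bl_Phi: "bounded_linear Phi" using linear_Phi linear_conv_bounded_linear by blast

definition certP :: "(real^'n) \<times> (real^'m) \<Rightarrow> bool" where
  "certP q = ((\<forall>i\<in>{1..l}. A i *v (vbar - fst q) \<in> C i)
     \<and> (\<forall>i\<in>{1..l}. \<forall>c\<in>C i. inner (snd q) (c - A i *v (vbar - fst q)) \<le> 0))"

lemma cert_opt:
  assumes cp: "certP (Phi z)"
  shows "d z = ereal (-(1/2) * (norm (W z))\<^sup>2) \<and> z \<in> Argmin d"
proof -
  define xh where "xh = vbar - W z"
  have inC: "\<forall>i\<in>{1..l}. A i *v xh \<in> C i" using cp unfolding certP_def Phi_def xh_def by simp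
  have nc: "\<forall>i\<in>{1..l}. \<forall>c\<in>C i. inner (Pi z) (c - A i *v xh) \<le> 0"
    using cp unfolding certP_def Phi_def xh_def by simp
  have each: "support_fun (C i) (blk_restr blk i z) = ereal (inner (blk_restr blk i z) (A i *v xh))"
    if i: "i \<in> {1..l}" for i
  proof (rule sup_attained)
    show "A i *v xh \<in> C i" using inC i by blast
    show "\<forall>c\<in>C i. inner (blk_restr blk i z) c \<le> inner (blk_restr blk i z) (A i *v xh)"
    proof
      fix c assume c: "c \<in> C i"
      have bs: "c - A i *v xh \<in> blk_space blk i"
        using subspace_diff[OF subspace_blk C_space[OF i c] C_space[OF i]] inC i by blast
      have vs: "c - A i *v xh \<in> V" using diff_V[OF i c] inC i by blast
      have "inner (blk_restr blk i z) (c - A i *v xh) = inner (Pi z) (c - A i *v xh)"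
        using inner_restr[OF bs] Pi_inner[OF vs] by simp
      also have "\<dots> \<le> 0" using nc i c by blast
      finally show "inner (blk_restr blk i z) c \<le> inner (blk_restr blk i z) (A i *v xh)"
        by (simp add: inner_diff_right)
    qed
  qed
  have "(\<Sum>i\<in>{1..l}. support_fun (C i) (blk_restr blk i z)) = ereal (inner (W z) xh)"
    by (simp add: each sum_ereal W_inner)
  then have "d z = ereal ((1/2) * (norm (W z - vbar))\<^sup>2 - (1/2) * (norm vbar)\<^sup>2 + inner (W z) xh)"
    unfolding d_eq by simp
  also have "(1/2) * (norm (W z - vbar))\<^sup>2 - (1/2) * (norm vbar)\<^sup>2 + inner (W z) xh = -(1/2) * (norm (W z))\<^sup>2"
    unfolding xh_def
    by (simp add: power2_norm_eq_inner inner_diff_left inner_diff_right inner_commute algebra_simps)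
  finally have dz: "d z = ereal (-(1/2) * (norm (W z))\<^sup>2)" .
  have "vbar - xh = W z" unfolding xh_def by simp
  then have "\<forall>z'. d z \<le> d z'" using wd[OF inC] dz by simp
  then show ?thesis using dz unfolding Argmin_def by simp
qed

lemma Dq_form: "Dq (Suc t) = (1/2) * (norm (W (Y (Suc t)) - vbar))\<^sup>2 - (1/2) * (norm vbar)\<^sup>2
   + inner (W (Y (Suc t))) xb + (\<Sum>i\<in>{1..l}. inner (Pi (Y (Suc t))) (pp t i - cc i))"
proof -
  have "s (Suc t) i = inner (blk_restr blk i (Y (Suc t))) (A i *v xb) + inner (Pi (Y (Suc t))) (pp t i - cc i)"
    if i: "i \<in> {1..l}" for i
  proof -
    have ccC: "cc i \<in> C i" unfolding cc_def using xb_C[OF i] .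
    have bs: "pp t i - cc i \<in> blk_space blk i"
      using subspace_diff[OF subspace_blk C_space[OF i pp_in[OF i]] C_space[OF i ccC]] .
    have vs: "pp t i - cc i \<in> V" using diff_V[OF i pp_in[OF i] ccC] .
    have "s (Suc t) i = inner (y (Suc t) i) (cc i) + inner (y (Suc t) i) (pp t i - cc i)"
      by (simp add: s_def inner_diff_right)
    also have "inner (y (Suc t) i) (pp t i - cc i) = inner (Pi (Y (Suc t))) (pp t i - cc i)"
      using inner_restr[OF bs, of "Y (Suc t)"] Pi_inner[OF vs, of "Y (Suc t)"] Y_restr[OF i] by simp
    finally show ?thesis using Y_restr[OF i] by (simp add: cc_def)
  qed
  then have "(\<Sum>i\<in>{1..l}. s (Suc t) i) = inner (W (Y (Suc t))) xb + (\<Sum>i\<in>{1..l}. inner (Pi (Y (Suc t))) (pp t i - cc i))"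
    by (simp add: sum.distrib W_inner)
  then show ?thesis unfolding Dq_def by simp
qed

lemma core:
  fixes r :: "nat \<Rightarrow> nat"
  assumes r: "strict_mono r"
  shows "\<exists>r' zh. strict_mono r' \<and> ((\<lambda>k. Phi (Y (r (r' k)))) \<longlonglongrightarrow> Phi zh) \<and> certP (Phi zh)
     \<and> ((\<lambda>k. Dq (Suc (r (r' k)))) \<longlonglongrightarrow> -(1/2) * (norm (W zh))\<^sup>2)"
proof -
  have "bounded (range (\<lambda>k. Phi (Y (r k))))"
    by (rule bounded_subset[OF Phi_bounded]) auto
  then have "\<exists>q r'. strict_mono r' \<and> ((\<lambda>k. Phi (Y (r k))) \<circ> r') \<longlonglongrightarrow> q"
    by (rule bounded_imp_convergent_subsequence)
  then obtain q r' where r': "strict_mono r'" and lim0: "((\<lambda>k. Phi (Y (r k))) \<circ> r') \<longlonglongrightarrow> q"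
    by blast
  have "closed (range Phi)"
    by (rule closed_subspace) (rule linear_subspace_image[OF linear_Phi subspace_UNIV])
  then have "q \<in> range Phi" by (rule closed_sequentially[OF _ _ lim0]) simp
  then obtain zh where qz: "q = Phi zh" by blast
  define tau where "tau = r \<circ> r'"
  have tau: "strict_mono tau" unfolding tau_def using r r' by (rule strict_mono_o)
  have limP: "(\<lambda>k. Phi (Y (tau k))) \<longlonglongrightarrow> Phi zh" using lim0 qz by (simp add: tau_def o_def)
  have hW: "(\<lambda>k. W (Y (tau k))) \<longlonglongrightarrow> W zh" using tendsto_fst[OF limP] by (simp add: Phi_def)
  have hP: "(\<lambda>k. Pi (Y (tau k))) \<longlonglongrightarrow> Pi zh" using tendsto_snd[OF limP] by (simp add: Phi_def)
  have hdl: "(\<lambda>k. dl (tau k) i) \<longlonglongrightarrow> 0" if i: "i \<in> {1..l}" for i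
    using LIMSEQ_subseq_LIMSEQ[OF dl_lim[OF i] tau] by (simp add: o_def)
  have hsum: "(\<lambda>k. \<Sum>i\<in>{1..l}. dl (tau k) i) \<longlonglongrightarrow> 0"
    by (rule tendsto_null_sum) (rule hdl)
  have hWs: "(\<lambda>k. W (Y (Suc (tau k)))) \<longlonglongrightarrow> W zh"
  proof -
    have "(\<lambda>k. W (Y (tau k)) + W (\<Sum>i\<in>{1..l}. dl (tau k) i)) \<longlonglongrightarrow> W zh + W 0"
      by (intro tendsto_add hW bounded_linear.tendsto[OF bl_W] hsum)
    then show ?thesis by (simp add: Y_suc W_add W_zero)
  qed
  have hPs: "(\<lambda>k. Pi (Y (Suc (tau k)))) \<longlonglongrightarrow> Pi zh"
  proof -
    have "(\<lambda>k. Pi (Y (tau k)) + Pi (\<Sum>i\<in>{1..l}. dl (tau k) i)) \<longlonglongrightarrow> Pi zh + Pi 0"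
      by (intro tendsto_add hP bounded_linear.tendsto[OF bl_Pi] hsum)
    then show ?thesis by (simp add: Y_suc linear_add[OF linear_Pi] linear_0[OF linear_Pi])
  qed
  define xh where "xh = vbar - W zh"
  have hx: "(\<lambda>k. x (Suc (tau k)) (i - 1)) \<longlonglongrightarrow> xh" if i: "i \<in> {1..l}" for i
  proof -
    have "(\<lambda>k. transpose (A j) *v dl (tau k) j) \<longlonglongrightarrow> 0" if j: "j \<in> {1..i-1}" for j
    proof -
      have "j \<in> {1..l}" using i j by auto
      from bounded_linear.tendsto[OF matrix_vector_mul_bounded_linear hdl[OF this], of "transpose (A j)"]
      show ?thesis by simp
    qed
    then have "(\<lambda>k. \<Sum>j\<in>{1..i-1}. transpose (A j) *v dl (tau k) j) \<longlonglongrightarrow> 0"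
      by (rule tendsto_null_sum)
    then have "(\<lambda>k. vbar - W (Y (tau k)) - (\<Sum>j\<in>{1..i-1}. transpose (A j) *v dl (tau k) j)) \<longlonglongrightarrow> vbar - W zh - 0"
      by (intro tendsto_diff tendsto_const hW)
    then show ?thesis using x_mid[OF i] unfolding xh_def by simp
  qed
  have hp: "(\<lambda>k. pp (tau k) i) \<longlonglongrightarrow> A i *v xh" if i: "i \<in> {1..l}" for i
  proof -
    have e: "pp t i = A i *v x (Suc t) (i - 1) - gam i *\<^sub>R dl t i" for t
      using dl_eq[OF i, of t] by simp
    have "(\<lambda>k. A i *v x (Suc (tau k)) (i - 1) - gam i *\<^sub>R dl (tau k) i) \<longlonglongrightarrow> A i *v xh - gam i *\<^sub>R 0"
      by (intro tendsto_diff tendsto_scaleR tendsto_const hdl[OF i]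
          bounded_linear.tendsto[OF matrix_vector_mul_bounded_linear hx[OF i]])
    then show ?thesis unfolding e by simp
  qed
  have inC: "A i *v xh \<in> C i" if i: "i \<in> {1..l}" for i
    using closed_sequentially[OF _ _ hp[OF i]] C_closed i pp_in[OF i] by blast
  have nc: "inner (Pi zh) (c - A i *v xh) \<le> 0" if i: "i \<in> {1..l}" and c: "c \<in> C i" for i c
  proof -
    have le: "inner (Pi (Y (Suc (tau k)))) (c - pp (tau k) i) \<le> 0" for k
    proof -
      have bs: "c - pp (tau k) i \<in> blk_space blk i"
        using subspace_diff[OF subspace_blk C_space[OF i c] C_space[OF i pp_in[OF i]]] .
      have vs: "c - pp (tau k) i \<in> V" using diff_V[OF i c pp_in[OF i]] .
      have "inner (Pi (Y (Suc (tau k)))) (c - pp (tau k) i) = inner (y (Suc (tau k)) i) (c - pp (tau k) i)"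
        using inner_restr[OF bs, of "Y (Suc (tau k))"] Pi_inner[OF vs, of "Y (Suc (tau k))"] Y_restr[OF i] by simp
      also have "\<dots> \<le> 0" by (rule y_normal[OF i c])
      finally show ?thesis .
    qed
    have "(\<lambda>k. inner (Pi (Y (Suc (tau k)))) (c - pp (tau k) i)) \<longlonglongrightarrow> inner (Pi zh) (c - A i *v xh)"
      by (intro tendsto_inner hPs tendsto_diff tendsto_const hp[OF i])
    then show ?thesis by (rule LIMSEQ_le_const2) (use le in auto)
  qed
  have cert: "certP (Phi zh)"
    unfolding certP_def Phi_def using inC nc unfolding xh_def by simp
  have limD: "(\<lambda>k. Dq (Suc (tau k))) \<longlonglongrightarrow> (1/2) * (norm (W zh - vbar))\<^sup>2 - (1/2) * (norm vbar)\<^sup>2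
      + inner (W zh) xb + (\<Sum>i\<in>{1..l}. inner (Pi zh) (A i *v xh - cc i))"
    unfolding Dq_form
    by (intro tendsto_intros hWs hPs hp) simp_all
  have sumeq: "(\<Sum>i\<in>{1..l}. inner (Pi zh) (A i *v xh - cc i)) = inner (W zh) xh - inner (W zh) xb"
  proof -
    have "inner (Pi zh) (A i *v xh - cc i) = inner (blk_restr blk i zh) (A i *v xh) - inner (blk_restr blk i zh) (A i *v xb)"
      if i: "i \<in> {1..l}" for i
    proof -
      have ccC: "cc i \<in> C i" unfolding cc_def using xb_C[OF i] .
      have bs: "A i *v xh - cc i \<in> blk_space blk i"
        using subspace_diff[OF subspace_blk C_space[OF i inC[OF i]] C_space[OF i ccC]] .
      have vs: "A i *v xh - cc i \<in> V" using diff_V[OF i inC[OF i] ccC] .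
      show ?thesis using inner_restr[OF bs, of zh] Pi_inner[OF vs, of zh]
        by (simp add: inner_diff_right cc_def)
    qed
    then show ?thesis by (simp add: sum_subtractf W_inner)
  qed
  have val: "(1/2) * (norm (W zh - vbar))\<^sup>2 - (1/2) * (norm vbar)\<^sup>2
      + inner (W zh) xb + (\<Sum>i\<in>{1..l}. inner (Pi zh) (A i *v xh - cc i)) = -(1/2) * (norm (W zh))\<^sup>2"
    unfolding sumeq unfolding xh_def
    by (simp add: power2_norm_eq_inner inner_diff_left inner_diff_right inner_commute algebra_simps)
  show ?thesis
    by (intro exI[of _ r'] exI[of _ zh] conjI r' cert)
       (use limP limD val in \<open>simp_all add: tau_def\<close>)
qed

lemma main:
  "(\<lambda>t. d (Y t)) \<longlonglongrightarrow> (INF z. d z) \<and> Argmin d \<noteq> {} \<and> (\<lambda>t. infdist (Y t) (Argmin d)) \<longlonglongrightarrow> 0"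
proof -
  have "strict_mono (id :: nat \<Rightarrow> nat)" by (simp add: strict_mono_def)
  from core[OF this] obtain r' zh where r': "strict_mono r'"
    and cz: "certP (Phi zh)" and lD: "(\<lambda>k. Dq (Suc (r' k))) \<longlonglongrightarrow> -(1/2) * (norm (W zh))\<^sup>2"
    by auto
  define m where "m = -(1/2) * (norm (W zh))\<^sup>2"
  have dz: "d zh = ereal m" and zA: "zh \<in> Argmin d" using cert_opt[OF cz] unfolding m_def by auto
  have ne: "Argmin d \<noteq> {}" using zA by blast
  have amin: "d zh \<le> d z" for z using zA unfolding Argmin_def by blast
  have inf: "(INF z. d z) = d zh"
    by (rule antisym) (auto intro: INF_lower INF_greatest amin)
  have lb: "m \<le> Dq t" for t using amin[of "Y t"] dz dY[of t] by simp
  have dec: "decseq Dq" unfolding decseq_def using Dq_mono by blast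
  obtain L where L: "Dq \<longlonglongrightarrow> L" using decseq_convergent[OF dec, of m] lb by blast
  have sm: "strict_mono (Suc \<circ> r')" using r' by (simp add: strict_mono_def)
  have "(Dq \<circ> (Suc \<circ> r')) \<longlonglongrightarrow> L" by (rule LIMSEQ_subseq_LIMSEQ[OF L sm])
  then have "(\<lambda>k. Dq (Suc (r' k))) \<longlonglongrightarrow> L" by (simp add: o_def)
  then have "L = m" using lD unfolding m_def by (rule LIMSEQ_unique)
  then have "(\<lambda>t. ereal (Dq t)) \<longlonglongrightarrow> ereal m" using L by (intro tendsto_ereal) simp
  then have lim1: "(\<lambda>t. d (Y t)) \<longlonglongrightarrow> (INF z. d z)" using inf dz by (simp add: dY)
  obtain G where G: "linear G" "\<forall>v\<in>Phi ` UNIV. Phi (G v) = v"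
    using linear_exists_right_inverse_on[OF linear_Phi subspace_UNIV] by blast
  have blG: "bounded_linear G" using G(1) linear_conv_bounded_linear by blast
  have sub: "\<exists>r'. strict_mono r' \<and> (\<lambda>k. infdist (Y (r (r' k))) (Argmin d)) \<longlonglongrightarrow> 0"
    if r: "strict_mono r" for r :: "nat \<Rightarrow> nat"
  proof -
    from core[OF r] obtain r' zh where r': "strict_mono r'"
      and lP: "(\<lambda>k. Phi (Y (r (r' k)))) \<longlonglongrightarrow> Phi zh" and cz: "certP (Phi zh)"
      by auto
    define e where "e k = Phi (Y (r (r' k))) - Phi zh" for k
    have e0: "e \<longlonglongrightarrow> 0" unfolding e_def using tendsto_diff[OF lP tendsto_const[of "Phi zh"]] by simp
    have Ge: "(\<lambda>k. G (e k)) \<longlonglongrightarrow> G 0" by (rule bounded_linear.tendsto[OF blG e0])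
    then have Ge0: "(\<lambda>k. norm (G (e k))) \<longlonglongrightarrow> 0"
      using linear_0[OF G(1)] tendsto_norm by fastforce
    have le: "infdist (Y (r (r' k))) (Argmin d) \<le> norm (G (e k))" for k
    proof -
      define zk where "zk = Y (r (r' k)) - G (e k)"
      have "e k = Phi (Y (r (r' k)) - zh)" unfolding e_def by (simp add: linear_diff[OF linear_Phi])
      then have "Phi (G (e k)) = e k" using G(2) by auto
      then have "Phi zk = Phi zh" unfolding zk_def e_def by (simp add: linear_diff[OF linear_Phi])
      then have "zk \<in> Argmin d" using cert_opt cz by auto
      then have "infdist (Y (r (r' k))) (Argmin d) \<le> dist (Y (r (r' k))) zk" by (rule infdist_le)
      also have "\<dots> = norm (G (e k))" unfolding zk_def by (simp add: dist_norm)
      finally show ?thesis .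
    qed
    have "(\<lambda>k. infdist (Y (r (r' k))) (Argmin d)) \<longlonglongrightarrow> 0"
      by (rule tendsto_sandwich[of "\<lambda>_. 0" _ _ "\<lambda>k. norm (G (e k))"])
         (use le Ge0 infdist_nonneg in \<open>auto intro: always_eventually\<close>)
    then show ?thesis using r' by blast
  qed
  have lim3: "(\<lambda>t. infdist (Y t) (Argmin d)) \<longlonglongrightarrow> 0"
  proof (rule ccontr)
    define f where "f t = infdist (Y t) (Argmin d)" for t
    assume "\<not> (\<lambda>t. infdist (Y t) (Argmin d)) \<longlonglongrightarrow> 0"
    then have "\<not> f \<longlonglongrightarrow> 0" unfolding f_def .
    then obtain eps where eps: "eps > 0" and nev: "\<not> eventually (\<lambda>t. dist (f t) 0 < eps) sequentially"
      unfolding tendsto_iff by blast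
    then have "frequently (\<lambda>t. \<not> dist (f t) 0 < eps) sequentially"
      by (simp add: not_eventually)
    then have "infinite {t. \<not> dist (f t) 0 < eps}"
      by (simp add: frequently_cofinite[symmetric] cofinite_eq_sequentially)
    from infinite_enumerate[OF this] obtain r :: "nat \<Rightarrow> nat" where r: "strict_mono r"
      and rin: "\<forall>n. r n \<in> {t. \<not> dist (f t) 0 < eps}"
      by blast
    from sub[OF r] obtain r' where "(\<lambda>k. f (r (r' k))) \<longlonglongrightarrow> 0" unfolding f_def by blast
    then have "eventually (\<lambda>k. dist (f (r (r' k))) 0 < eps) sequentially"
      using eps unfolding tendsto_iff by blast
    then obtain N where "\<forall>k\<ge>N. dist (f (r (r' k))) 0 < eps" unfolding eventually_sequentially by blast
    then have "dist (f (r (r' N))) 0 < eps" by simp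
    moreover have "\<not> dist (f (r (r' N))) 0 < eps" using rin by blast
    ultimately show False by contradiction
  qed
  show ?thesis using lim1 ne lim3 by blast
qed

end

theorem theorem3p4:
  fixes l :: nat
    and blk :: "'m::finite \<Rightarrow> nat"
    and C :: "nat \<Rightarrow> (real^'m) set"
    and A :: "nat \<Rightarrow> real^'n::finite^'m"
    and vbar :: "real^'n"
    and d :: "real^'m \<Rightarrow> ereal"
    and gam :: "nat \<Rightarrow> real"
    and x :: "nat \<Rightarrow> nat \<Rightarrow> real^'n"
    and y :: "nat \<Rightarrow> nat \<Rightarrow> real^'m"
    and Y :: "nat \<Rightarrow> real^'m"
  assumes l_pos: "l \<ge> 1"
    and blk_range: "\<forall>j. blk j \<in> {1..l}"
    and blk_nonempty: "\<forall>i\<in>{1..l}. \<exists>j. blk j = i"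
    and C_block: "\<forall>i\<in>{1..l}. C i \<subseteq> blk_space blk i"
    and C_ne: "\<forall>i\<in>{1..l}. C i \<noteq> {}"
    and C_closed: "\<forall>i\<in>{1..l}. closed (C i)"
    and C_convex: "\<forall>i\<in>{1..l}. convex (C i)"
    and A_block: "\<forall>i\<in>{1..l}. \<forall>j. blk j \<noteq> i \<longrightarrow> A i $ j = 0"
    and A_nz: "\<forall>i\<in>{1..l}. A i \<noteq> 0"
    and CQ: "(\<Inter>i\<in>{1..l}. {z. A i *v z \<in> rel_interior (C i)}) \<noteq> {}"
    and d_def: "\<forall>yy. d yy = ereal ((1/2) * (norm ((\<Sum>i\<in>{1..l}. transpose (A i) *v blk_restr blk i yy) - vbar))\<^sup>2
                                  - (1/2) * (norm vbar)\<^sup>2)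
                         + (\<Sum>i\<in>{1..l}. support_fun (C i) (blk_restr blk i yy))"
    and gam_def: "\<forall>i\<in>{1..l}. gam i = lambda_max (transpose (A i) ** A i)"
    and y_init: "\<forall>i\<in>{1..l}. y 0 i = 0"
    and x_init: "x 0 l = vbar"
    and x_start: "\<forall>t. x (Suc t) 0 = x t l"
    and x_step: "\<forall>t. \<forall>i\<in>{1..l}.
        x (Suc t) i = (x (Suc t) (i - 1) - (1 / gam i) *\<^sub>R (transpose (A i) *v (A i *v x (Suc t) (i - 1))))
          + (1 / gam i) *\<^sub>R (transpose (A i) *v Proj (C i) (gam i *\<^sub>R y t i + A i *v x (Suc t) (i - 1)))"
    and y_step: "\<forall>t. \<forall>i\<in>{1..l}.
        y (Suc t) i = y t i + (1 / gam i) *\<^sub>R (A i *v x (Suc t) (i - 1))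
          - (1 / gam i) *\<^sub>R Proj (C i) (gam i *\<^sub>R y t i + A i *v x (Suc t) (i - 1))"
    and Y_def: "\<forall>t. Y t = (\<Sum>i\<in>{1..l}. y t i)"
  shows "(\<lambda>t. d (Y t)) \<longlonglongrightarrow> (INF z. d z)
    \<and> Argmin d \<noteq> {}
    \<and> (\<lambda>t. infdist (Y t) (Argmin d)) \<longlonglongrightarrow> 0"
  proof -
  interpret S: setting l blk C A vbar d gam x y Y
    by (rule setting.intro) (fact+)
  show ?thesis by (rule S.main)
qed

end
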